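(* Let $\mathfrak k$ be an $\mathcal A$-invariant subalgebra of $\mathfrak g$ with $\mathfrak h\subseteq\mathfrak k\subsetneq\mathfrak g$ and $D[\mathfrak k]\neq\{\bar\chi^{\mathfrak k}\}$. Put $k=\dim(\mathfrak g/\mathfrak k)$, $R=\frac{1}{k\sqrt{5-1/k}}$ and $\Omega=\{A\in D[\mathfrak k]:|A-\bar\chi^{\mathfrak k}|=R\}$. Then $\Omega\subset\mathfrak F_+$, and for every $A\in\Omega$ there is a number $t_A\ge1$ such that, for $t\ge0$, the operator $A_t=t(A-\bar\chi^{\mathfrak k})+\bar\chi^{\mathfrak k}$ belongs to $\mathfrak F_+$ if $0\le t\le t_A$ and does not belong to $\mathfrak F_+$ if $t_A<t<\infty$. Consequently $X[\mathfrak k]=D[\mathfrak k]\cap\mathfrak F_+$ is star-shaped with respect to $\bar\chi^{\mathfrak k}$ and contains the Euclidean ball bounded by the sphere $\Omega$, i.e. $\{A\in D[\mathfrak k]:|A-\bar\chi^{\mathfrak k}|\le R\}$.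
   Context: $\mathfrak g$ is the Lie algebra of a compact Lie group with a Euclidean inner product $Q$ satisfying $Q([X,Y],Z)=Q(X,[Y,Z])$. Linear operators are symmetric if $Q(AX,Y)=Q(X,AY)$; the norm is $|A|=\sqrt{\mathrm{tr}(A^2)}$ for symmetric $A$. For symmetric $A$ and $a\in\mathbb R$, $F_a$ is the span of eigenvectors with eigenvalue $\le a$; $A$ is filtering if $[F_a,F_b]\subseteq F_{a+b}$ for all $a,b$. $\mathfrak F_+$ is the set of filtering symmetric operators with nonnegative spectrum and trace $1$. $\mathfrak h\subsetneq\mathfrak g$ is a fixed subalgebra and $\mathcal A$ a compact group of automorphisms of $\mathfrak g$ preserving $\mathfrak h$ and $Q$. For a subspace $\mathfrak k$, $1_{\mathfrak k}$ is the $Q$-orthogonal projection onto $\mathfrak k$ and (for $\mathfrak k\neq\mathfrak g$) $\bar\chi^{\mathfrak k}=\frac{1}{\dim(\mathfrak g/\mathfrak k)}(1_{\mathfrak g}-1_{\mathfrak k})$. For an $\mathcal A$-invariant subalgebra $\mathfrak k\supseteq\mathfrak h$, $D[\mathfrak k]$ is the set of symmetric operators $A$ with nonnegative spectrum and trace $1$ that commute with every element of $\mathcal A$, satisfy $A\mathfrak k=0$ and commute with $\mathrm{ad}(X)$ for all $X\in\mathfrak k$. *)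

theory Defs
  imports "HOL-Analysis.Analysis"
begin

text \<open>The Lie algebra g is modelled as a finite-dimensional real inner product space
  'a :: euclidean_space whose inner product plays the role of Q, with a bracket br
  that is bilinear, antisymmetric, satisfies Jacobi, and is Q-invariant.  A real Lie
  algebra with an ad-invariant positive definite inner product is exactly the Lie algebra
  of a compact Lie group.\<close>

definition compact_lie_alg :: "('a::euclidean_space \<Rightarrow> 'a \<Rightarrow> 'a) \<Rightarrow> bool" where
  "compact_lie_alg br \<longleftrightarrow> bilinear br
     \<and> (\<forall>x y. br x y = - br y x)
     \<and> (\<forall>x y z. br x (br y z) + br y (br z x) + br z (br x y) = 0)
     \<and> (\<forall>x y z. inner (br x y) z = inner x (br y z))"

definition subalgebra :: "('a::euclidean_space \<Rightarrow> 'a \<Rightarrow> 'a) \<Rightarrow> 'a set \<Rightarrow> bool" where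
  "subalgebra br K \<longleftrightarrow> subspace K \<and> (\<forall>x\<in>K. \<forall>y\<in>K. br x y \<in> K)"

definition compact_aut_group ::
  "('a::euclidean_space \<Rightarrow> 'a \<Rightarrow> 'a) \<Rightarrow> 'a set \<Rightarrow> ('a \<Rightarrow> 'a) set \<Rightarrow> bool" where
  "compact_aut_group br H Aut \<longleftrightarrow>
     id \<in> Aut \<and> (\<forall>f\<in>Aut. \<forall>g\<in>Aut. f \<circ> g \<in> Aut) \<and> (\<forall>f\<in>Aut. inv f \<in> Aut)
     \<and> compact Aut
     \<and> (\<forall>f\<in>Aut. linear f \<and> bij f
            \<and> (\<forall>x y. f (br x y) = br (f x) (f y))
            \<and> (\<forall>x y. inner (f x) (f y) = inner x y)
            \<and> f ` H = H)"

definition symmetric_op :: "('a::euclidean_space \<Rightarrow> 'a) \<Rightarrow> bool" where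
  "symmetric_op A \<longleftrightarrow> linear A \<and> (\<forall>x y. inner (A x) y = inner x (A y))"

definition trace_op :: "('a::euclidean_space \<Rightarrow> 'a) \<Rightarrow> real" where
  "trace_op A = (\<Sum>b\<in>Basis. inner (A b) b)"

definition op_norm_tr :: "('a::euclidean_space \<Rightarrow> 'a) \<Rightarrow> real" where
  "op_norm_tr A = sqrt (trace_op (A \<circ> A))"

definition nonneg_spectrum :: "('a::euclidean_space \<Rightarrow> 'a) \<Rightarrow> bool" where
  "nonneg_spectrum A \<longleftrightarrow> (\<forall>c v. v \<noteq> 0 \<and> A v = c *\<^sub>R v \<longrightarrow> c \<ge> 0)"

definition Fsub :: "('a::euclidean_space \<Rightarrow> 'a) \<Rightarrow> real \<Rightarrow> 'a set" where
  "Fsub A a = span {v. v \<noteq> 0 \<and> (\<exists>c\<le>a. A v = c *\<^sub>R v)}"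

definition filtering :: "('a::euclidean_space \<Rightarrow> 'a \<Rightarrow> 'a) \<Rightarrow> ('a \<Rightarrow> 'a) \<Rightarrow> bool" where
  "filtering br A \<longleftrightarrow> (\<forall>a b. \<forall>x\<in>Fsub A a. \<forall>y\<in>Fsub A b. br x y \<in> Fsub A (a + b))"

definition Fplus :: "('a::euclidean_space \<Rightarrow> 'a \<Rightarrow> 'a) \<Rightarrow> ('a \<Rightarrow> 'a) set" where
  "Fplus br = {A. symmetric_op A \<and> filtering br A \<and> nonneg_spectrum A \<and> trace_op A = 1}"

definition orth_proj :: "'a::euclidean_space set \<Rightarrow> 'a \<Rightarrow> 'a" where
  "orth_proj K x = (THE y. y \<in> K \<and> (\<forall>z\<in>K. inner (x - y) z = 0))"

definition codim :: "'a::euclidean_space set \<Rightarrow> nat" where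
  "codim K = DIM('a) - dim K"

definition chibar :: "'a::euclidean_space set \<Rightarrow> 'a \<Rightarrow> 'a" where
  "chibar K x = (1 / real (codim K)) *\<^sub>R (x - orth_proj K x)"

definition Dset :: "('a::euclidean_space \<Rightarrow> 'a \<Rightarrow> 'a) \<Rightarrow> ('a \<Rightarrow> 'a) set \<Rightarrow> 'a set
    \<Rightarrow> ('a \<Rightarrow> 'a) set" where
  "Dset br Aut K = {A. symmetric_op A \<and> nonneg_spectrum A \<and> trace_op A = 1
      \<and> (\<forall>f\<in>Aut. A \<circ> f = f \<circ> A)
      \<and> (\<forall>x\<in>K. A x = 0)
      \<and> (\<forall>X\<in>K. \<forall>y. A (br X y) = br X (A y))}"

definition star_shaped_wrt :: "('a::euclidean_space \<Rightarrow> 'a) set \<Rightarrow> ('a \<Rightarrow> 'a) \<Rightarrow> bool" where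
  "star_shaped_wrt S C \<longleftrightarrow> C \<in> S \<and>
     (\<forall>A\<in>S. \<forall>s\<in>{0..1}. (\<lambda>x. s *\<^sub>R (A x - C x) + C x) \<in> S)"

end

theory Submission
  imports Defs
begin
lemma proj_exists:
  fixes K :: "'a::euclidean_space set"
  assumes "subspace K"
  shows "\<exists>y. y \<in> K \<and> (\<forall>z\<in>K. inner (x - y) z = 0)"
proof -
  obtain y z where "y \<in> span K" "\<And>w. w \<in> span K \<Longrightarrow> orthogonal z w" "x = y + z"
    using orthogonal_subspace_decomp_exists by blast
  moreover have sK: "span K = K" using assms by (simp add: span_eq_iff)
  ultimately show ?thesis by (intro exI[of _ y]) (simp add: orthogonal_def)
qed

lemma proj_unique:
  fixes K :: "'a::euclidean_space set"
  assumes "subspace K" "y1 \<in> K" "\<forall>z\<in>K. inner (x - y1) z = 0"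
     "y2 \<in> K" "\<forall>z\<in>K. inner (x - y2) z = 0"
  shows "y1 = y2"
proof -
  have "y2 - y1 \<in> K" using assms by (simp add: subspace_diff)
  then have "inner (x - y1) (y2 - y1) = 0" "inner (x - y2) (y2 - y1) = 0" using assms by auto
  then have "inner (y2 - y1) (y2 - y1) = 0" by (simp add: inner_diff_left inner_diff_right)
  then show ?thesis by simp
qed

lemma orth_proj:
  fixes K :: "'a::euclidean_space set"
  assumes "subspace K"
  shows "orth_proj K x \<in> K" "\<forall>z\<in>K. inner (x - orth_proj K x) z = 0"
proof -
  obtain y where y: "y \<in> K" "\<forall>z\<in>K. inner (x - y) z = 0" using proj_exists[OF assms] by blast
  have "orth_proj K x = y" unfolding orth_proj_def
    by (rule the_equality) (use y proj_unique[OF assms] in blast)+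
  then show "orth_proj K x \<in> K" "\<forall>z\<in>K. inner (x - orth_proj K x) z = 0" using y by auto
qed

lemma orth_proj_eq:
  fixes K :: "'a::euclidean_space set"
  assumes "subspace K" "y \<in> K" "\<forall>z\<in>K. inner (x - y) z = 0"
  shows "orth_proj K x = y"
  using proj_unique[OF assms(1) orth_proj[OF assms(1)] assms(2,3)] by blast

lemma orth_proj_id: "subspace K \<Longrightarrow> x \<in> K \<Longrightarrow> orth_proj K x = x"
  by (rule orth_proj_eq) auto

lemma orth_proj_zero_iff: "subspace K \<Longrightarrow> orth_proj K x = 0 \<longleftrightarrow> (\<forall>z\<in>K. inner x z = 0)"
  using orth_proj[of K x] orth_proj_eq[of K 0 x] by (auto simp: subspace_0)

lemma orth_proj_add: "subspace K \<Longrightarrow> orth_proj K (x + y) = orth_proj K x + orth_proj K y"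
proof (rule orth_proj_eq)
  assume K: "subspace K"
  show "orth_proj K x + orth_proj K y \<in> K" using orth_proj[OF K] K by (simp add: subspace_add)
  have e: "x + y - (orth_proj K x + orth_proj K y) = (x - orth_proj K x) + (y - orth_proj K y)"
    by (simp add: algebra_simps)
  show "\<forall>z\<in>K. inner (x + y - (orth_proj K x + orth_proj K y)) z = 0"
    unfolding e inner_add_left using orth_proj[OF K] by simp
qed

lemma orth_proj_scale: "subspace K \<Longrightarrow> orth_proj K (c *\<^sub>R x) = c *\<^sub>R orth_proj K x"
proof (rule orth_proj_eq)
  assume K: "subspace K"
  show "c *\<^sub>R orth_proj K x \<in> K" using orth_proj[OF K] K by (simp add: subspace_scale)
  have e: "c *\<^sub>R x - c *\<^sub>R orth_proj K x = c *\<^sub>R (x - orth_proj K x)"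
    by (simp add: algebra_simps)
  show "\<forall>z\<in>K. inner (c *\<^sub>R x - c *\<^sub>R orth_proj K x) z = 0"
    unfolding e inner_scaleR_left using orth_proj[OF K] by simp
qed

lemma orth_proj_linear: "subspace K \<Longrightarrow> linear (orth_proj K)"
  by (rule linearI) (auto simp: orth_proj_add orth_proj_scale)

lemma orth_proj_sym: "subspace K \<Longrightarrow> inner (orth_proj K x) y = inner x (orth_proj K y)"
proof -
  assume K: "subspace K"
  have "inner (x - orth_proj K x) (orth_proj K y) = 0" "inner (y - orth_proj K y) (orth_proj K x) = 0"
    using orth_proj[OF K] by auto
  then have "inner (orth_proj K y) x = inner (orth_proj K y) (orth_proj K x)"
    "inner (orth_proj K x) y = inner (orth_proj K x) (orth_proj K y)"
    by (auto simp: inner_diff_right inner_commute)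
  then show ?thesis by (simp add: inner_commute)
qed

lemma orth_proj_idem: "subspace K \<Longrightarrow> orth_proj K (orth_proj K x) = orth_proj K x"
  using orth_proj orth_proj_id by blast

lemma orth_proj_perp: "subspace K \<Longrightarrow> orth_proj K (x - orth_proj K x) = 0"
  using linear_diff[OF orth_proj_linear, of K x "orth_proj K x"] orth_proj_idem[of K x] by simp

lemma quad_nonneg_zero:
  fixes a q :: real
  assumes "\<forall>t. 0 \<le> 2 * t * a + t^2 * q" 
  shows "a = 0"
proof (rule ccontr)
  assume a: "a \<noteq> 0"
  have q: "q \<ge> 0" using assms[rule_format, of 1] assms[rule_format, of "-1"] by (auto simp: power2_eq_square) 
  define t where "t = - a / (q + 1)"
  have h0: "0 \<le> 2 * t * a + t^2 * q" using assms by blast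
  have h1: "t^2 * q \<le> t^2 * (q+1)" by (simp add: mult_left_mono)
  have qp: "q + 1 > 0" using q by linarith
  have e1: "t * (q+1) = -a" using qp by (simp add: t_def)
  have h2: "t^2 * (q+1) = - (a * t)" by (metis e1 mult.assoc mult.commute power2_eq_square mult_minus_left)
  have h3: "a * t = - (a^2/(q+1))" by (simp add: t_def power2_eq_square)
  have h4: "a^2/(q+1) > 0" using a qp by auto
  have h5: "2 * t * a = 2 * (a * t)" by simp
  show False using h0 h1 h2 h3 h4 h5 by linarith
qed

lemma psd_zero:
  fixes T :: "'a::euclidean_space \<Rightarrow> 'a"
  assumes lin: "linear T" and sym: "\<forall>x y. inner (T x) y = inner x (T y)" and U: "subspace U"
   and psd: "\<forall>y\<in>U. 0 \<le> inner y (T y)" and x: "x \<in> U" "inner x (T x) = 0" and y: "y \<in> U"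
  shows "inner y (T x) = 0"
proof -
  have "0 \<le> 2 * t * inner y (T x) + t^2 * inner y (T y)" for t
  proof -
    have "x + t *\<^sub>R y \<in> U" using U x y by (simp add: subspace_add subspace_scale)
    then have "0 \<le> inner (x + t *\<^sub>R y) (T (x + t *\<^sub>R y))" using psd by blast
    also have "\<dots> = inner x (T x) + t * inner x (T y) + t * inner y (T x) + t^2 * inner y (T y)"
      by (simp add: linear_add[OF lin] linear_scale[OF lin] inner_add_left inner_add_right power2_eq_square algebra_simps)
    also have "inner x (T y) = inner y (T x)" using sym by (metis inner_commute)
    finally show ?thesis using x by (simp add: algebra_simps)
  qed
  then show ?thesis using quad_nonneg_zero by blast
qed

lemma eig_exists:
  fixes T :: "'a::euclidean_space \<Rightarrow> 'a"
  assumes lin: "linear T" and sym: "\<forall>x y. inner (T x) y = inner x (T y)" and U: "subspace U"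
    and inv: "\<forall>x\<in>U. T x \<in> U" and u0: "u0 \<in> U" "u0 \<noteq> 0"
  shows "\<exists>u m. u \<in> U \<and> u \<noteq> 0 \<and> T u = m *\<^sub>R u \<and> (\<forall>x\<in>U. inner x (T x) \<le> m * inner x x)"
proof -
  define S where "S = U \<inter> sphere 0 1"
  have cS: "compact S" unfolding S_def
    by (intro closed_Int_compact closed_subspace U compact_sphere)
  have "u0 /\<^sub>R norm u0 \<in> S" using u0 U by (auto simp: S_def subspace_scale)
  then have neS: "S \<noteq> {}" by blast
  have "continuous_on S (\<lambda>x. inner x (T x))"
    using lin by (intro continuous_intros linear_continuous_on linear_conv_bounded_linear[THEN iffD1])
  then obtain u where u: "u \<in> S" and umax: "\<forall>y\<in>S. inner y (T y) \<le> inner u (T u)"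
    using continuous_attains_sup[OF cS neS] by blast
  define m where "m = inner u (T u)"
  have uU: "u \<in> U" and un: "norm u = 1" using u by (auto simp: S_def)
  have bound: "inner x (T x) \<le> m * inner x x" if x: "x \<in> U" for x
  proof (cases "x = 0")
    case True then show ?thesis by (simp add: linear_0[OF lin])
  next
    case False
    have "x /\<^sub>R norm x \<in> S" using x False U by (auto simp: S_def subspace_scale)
    then have "inner (x /\<^sub>R norm x) (T (x /\<^sub>R norm x)) \<le> m" using umax m_def by blast
    then have "inner x (T x) / (norm x)^2 \<le> m"
      by (simp add: linear_scale[OF lin] power2_eq_square divide_simps)
    then have "inner x (T x) \<le> m * (norm x)^2" using False by (simp add: divide_simps)
    then show ?thesis by (simp add: power2_norm_eq_inner)
  qed
  define B where "B = (\<lambda>x. m *\<^sub>R x - T x)"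
  have linB: "linear B" by (rule linearI) (auto simp: B_def linear_add[OF lin] linear_scale[OF lin] algebra_simps)
  have symB: "\<forall>x y. inner (B x) y = inner x (B y)" using sym by (simp add: B_def inner_diff_left inner_diff_right)
  have psd: "\<forall>y\<in>U. 0 \<le> inner y (B y)" using bound by (simp add: B_def inner_diff_right)
  have uu: "inner u u = 1" using un by (simp add: norm_eq_1)
  have "inner u (B u) = 0" by (simp add: B_def inner_diff_right uu m_def)
  have BuU: "B u \<in> U" using inv uU U by (simp add: B_def subspace_diff subspace_scale)
  have "inner (B u) (B u) = 0" using psd_zero[OF linB symB U psd uU \<open>inner u (B u) = 0\<close> BuU] .
  then have "T u = m *\<^sub>R u" by (simp add: B_def)
  moreover have "u \<noteq> 0" using un by auto
  ultimately show ?thesis using uU bound by blast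
qed

lemma eig_orth:
  fixes T :: "'a::euclidean_space \<Rightarrow> 'a"
  assumes sym: "\<forall>x y. inner (T x) y = inner x (T y)"
    and "T x = a *\<^sub>R x" "T z = c *\<^sub>R z" "a \<noteq> c"
  shows "inner x z = 0"
proof -
  have "inner (T x) z = inner x (T z)" using sym by blast
  then have "a * inner x z = c * inner x z" using assms by simp
  then show ?thesis using assms by simp
qed

lemma Fsub_orth:
  fixes T :: "'a::euclidean_space \<Rightarrow> 'a"
  assumes sym: "\<forall>x y. inner (T x) y = inner x (T y)"
    and v: "v \<in> Fsub T a" and z: "T z = c *\<^sub>R z" "c > a"
  shows "inner v z = 0"
  using v unfolding Fsub_def
proof (induction rule: span_induct)
  case base
  show ?case by (auto simp: subspace_def inner_add_left)
next
  case (step e)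
  then obtain c' where c': "c' \<le> a" "T e = c' *\<^sub>R e" by blast
  then have "c' \<noteq> c" using z(2) by auto
  then show ?case using eig_orth[OF sym c'(2) z(1)] by simp
qed

definition eigv :: "('a::euclidean_space \<Rightarrow> 'a) \<Rightarrow> 'a \<Rightarrow> real \<Rightarrow> bool" where
  "eigv T x c \<longleftrightarrow> x \<noteq> 0 \<and> T x = c *\<^sub>R x"

lemma Fsub_iff:
  fixes T :: "'a::euclidean_space \<Rightarrow> 'a"
  assumes lin: "linear T" and sym: "\<forall>x y. inner (T x) y = inner x (T y)"
  shows "v \<in> Fsub T a \<longleftrightarrow> (\<forall>z c. eigv T z c \<and> c > a \<longrightarrow> inner v z = 0)"
proof
  assume "v \<in> Fsub T a" then show "\<forall>z c. eigv T z c \<and> c > a \<longrightarrow> inner v z = 0"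
    using Fsub_orth[OF sym] by (auto simp: eigv_def)
next
  assume H: "\<forall>z c. eigv T z c \<and> c > a \<longrightarrow> inner v z = 0"
  obtain w r where w: "w \<in> span (Fsub T a)" and r: "\<And>q. q \<in> span (Fsub T a) \<Longrightarrow> orthogonal r q" and vwr: "v = w + r"
    using orthogonal_subspace_decomp_exists by blast
  have sW: "span (Fsub T a) = Fsub T a" by (simp add: Fsub_def)
  define U where "U = {u. \<forall>e c. eigv T e c \<longrightarrow> inner u e = 0}"
  have U: "subspace U" unfolding U_def subspace_def by (auto simp: inner_add_left)
  have inv: "\<forall>x\<in>U. T x \<in> U"
  proof
    fix x assume "x \<in> U"
    show "T x \<in> U" unfolding U_def
    proof (intro allI impI CollectI)
      fix e c assume "eigv T e c"
      then have "inner (T x) e = c * inner x e" using sym by (metis eigv_def inner_scaleR_right)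
      then show "inner (T x) e = 0" using \<open>x \<in> U\<close> \<open>eigv T e c\<close> by (auto simp: U_def)
    qed
  qed
  have rU: "r \<in> U" unfolding U_def
  proof (intro allI impI CollectI)
    fix e c assume e: "eigv T e c"
    show "inner r e = 0"
    proof (cases "c \<le> a")
      case True
      then have "e \<in> Fsub T a" using e unfolding Fsub_def eigv_def by (intro span_base) auto
      then show ?thesis using r sW by (simp add: orthogonal_def)
    next
      case False
      then have "inner v e = 0" "inner w e = 0" using H e Fsub_orth[OF sym] w sW by (auto simp: eigv_def)
      then show ?thesis using vwr by (simp add: inner_add_left)
    qed
  qed
  have "r = 0"
  proof (rule ccontr)
    assume "r \<noteq> 0"
    then obtain u m where "u \<in> U" "u \<noteq> 0" "T u = m *\<^sub>R u"
      using eig_exists[OF lin sym U inv rU] by blast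
    then have "inner u u = 0" unfolding U_def eigv_def by blast
    then show False using \<open>u \<noteq> 0\<close> by simp
  qed
  then show "v \<in> Fsub T a" using vwr w sW by simp
qed

lemma filtering_iff:
  fixes T :: "'a::euclidean_space \<Rightarrow> 'a"
  assumes lin: "linear T" and sym: "\<forall>x y. inner (T x) y = inner x (T y)" and br: "bilinear br"
  shows "filtering br T \<longleftrightarrow> (\<forall>x y z a b c. eigv T x a \<and> eigv T y b \<and> eigv T z c \<and> c > a + b
           \<longrightarrow> inner (br x y) z = 0)"
proof
  assume f: "filtering br T"
  show "\<forall>x y z a b c. eigv T x a \<and> eigv T y b \<and> eigv T z c \<and> c > a + b \<longrightarrow> inner (br x y) z = 0"
  proof (intro allI impI)
    fix x y z a b c assume H: "eigv T x a \<and> eigv T y b \<and> eigv T z c \<and> c > a + b"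
    have "x \<in> Fsub T a" "y \<in> Fsub T b" using H unfolding Fsub_def eigv_def by (auto intro!: span_base)
    then have "br x y \<in> Fsub T (a + b)" using f by (auto simp: filtering_def)
    then show "inner (br x y) z = 0" using H Fsub_iff[OF lin sym] by blast
  qed
next
  assume H: "\<forall>x y z a b c. eigv T x a \<and> eigv T y b \<and> eigv T z c \<and> c > a + b \<longrightarrow> inner (br x y) z = 0"
  show "filtering br T" unfolding filtering_def
  proof (intro allI ballI)
    fix a b x y assume x: "x \<in> Fsub T a" and y: "y \<in> Fsub T b"
    show "br x y \<in> Fsub T (a + b)" unfolding Fsub_iff[OF lin sym]
    proof (intro allI impI)
      fix z c assume z: "eigv T z c \<and> a + b < c"
      have "inner (br x' y) z = 0" if x': "x' \<in> Fsub T a" for x'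
        using x' unfolding Fsub_def
      proof (induction rule: span_induct)
        case base
        show ?case by (auto simp: subspace_def bilinear_ladd[OF br] bilinear_lmul[OF br] bilinear_lzero[OF br] inner_add_left)
      next
        case (step e)
        then obtain a' where a': "a' \<le> a" "T e = a' *\<^sub>R e" "e \<noteq> 0" by blast
        show ?case using y unfolding Fsub_def
        proof (induction rule: span_induct)
          case base
          show ?case by (auto simp: subspace_def bilinear_radd[OF br] bilinear_rmul[OF br] bilinear_rzero[OF br] inner_add_left)
        next
          case (step f)
          then obtain b' where "b' \<le> b" "T f = b' *\<^sub>R f" "f \<noteq> 0" by blast
          then show ?case using H a' z by (auto simp: eigv_def)
        qed
      qed
      then show "inner (br x y) z = 0" using x by blast
    qed
  qed
qed

lemma proj_formula:
  fixes K :: "'a::euclidean_space set"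
  assumes K: "subspace K" and U: "U \<subseteq> K" "pairwise orthogonal U" "\<And>u. u \<in> U \<Longrightarrow> norm u = 1"
    "finite U" "span U = K"
  shows "orth_proj K x = (\<Sum>u\<in>U. inner x u *\<^sub>R u)"
proof (rule orth_proj_eq[OF K])
  show "(\<Sum>u\<in>U. inner x u *\<^sub>R u) \<in> K" using U K by (auto intro!: subspace_sum subspace_scale)
  have uu: "inner u u = 1" if "u \<in> U" for u using U(3)[OF that] by (simp add: norm_eq_1)
  have "inner (x - (\<Sum>u\<in>U. inner x u *\<^sub>R u)) z = 0" if z: "z \<in> span U" for z
    using z
  proof (induction rule: span_induct)
    case base show ?case by (auto simp: subspace_def inner_add_right)
  next
    case (step w)
    have "(\<Sum>u\<in>U. inner x u * inner u w) = (\<Sum>u\<in>{w}. inner x u * inner u w)"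
      by (rule sum.mono_neutral_right) (use step U(2,4) in \<open>auto simp: pairwise_def orthogonal_def\<close>)
    then show ?case using step uu by (simp add: inner_diff_left inner_sum_left)
  qed
  then show "\<forall>z\<in>K. inner (x - (\<Sum>u\<in>U. inner x u *\<^sub>R u)) z = 0" using U by auto
qed

lemma trace_proj:
  fixes K :: "'a::euclidean_space set"
  assumes K: "subspace K"
  shows "(\<Sum>b\<in>Basis. inner (orth_proj K b) b) = real (dim K)"
proof -
  obtain U where U: "U \<subseteq> K" "pairwise orthogonal U" "\<And>u. u \<in> U \<Longrightarrow> norm u = 1"
    "independent U" "card U = dim K" "span U = K"
    using orthonormal_basis_subspace[OF K] by blast
  have fU: "finite U" using U(4) independent_imp_finite by blast
  have "(\<Sum>b\<in>Basis. inner (orth_proj K b) b) = (\<Sum>b\<in>Basis. \<Sum>u\<in>U. inner b u * inner u b)"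
    using proj_formula[OF K U(1-3) fU U(6)] by (simp add: inner_sum_left)
  also have "\<dots> = (\<Sum>u\<in>U. \<Sum>b\<in>Basis. inner u b * inner u b)"
    by (subst sum.swap) (simp add: inner_commute)
  also have "\<dots> = (\<Sum>u\<in>U. inner u u)" by (simp add: euclidean_inner[symmetric])
  also have "\<dots> = (\<Sum>u\<in>U. 1)" using U(3) by (intro sum.cong) (auto simp: norm_eq_1)
  finally show ?thesis using U(5) by simp
qed

locale LS =
  fixes br :: "'a::euclidean_space \<Rightarrow> 'a \<Rightarrow> 'a" and K :: "'a set"
  assumes g: "compact_lie_alg br" and sub: "subalgebra br K" and KU: "K \<noteq> UNIV"
begin

abbreviation "P \<equiv> orth_proj K"
abbreviation "kk \<equiv> real (codim K)"
abbreviation "C \<equiv> chibar K"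

lemma Ks: "subspace K" using sub by (simp add: subalgebra_def)
lemma brb: "bilinear br" using g by (simp add: compact_lie_alg_def)
lemma anti: "br x y = - br y x" using g unfolding compact_lie_alg_def by blast
lemma binv: "inner (br x y) z = inner x (br y z)" using g unfolding compact_lie_alg_def by blast
lemma brK: "x \<in> K \<Longrightarrow> y \<in> K \<Longrightarrow> br x y \<in> K" using sub by (simp add: subalgebra_def)
lemma br_lin: "linear (br X)" using brb by (simp add: bilinear_def)

lemma Pin: "P x \<in> K" using orth_proj[OF Ks] by blast
lemma Porth: "z \<in> K \<Longrightarrow> inner (x - P x) z = 0" using orth_proj[OF Ks] by blast
lemma Plin: "linear P" by (rule orth_proj_linear[OF Ks])
lemma Pid: "x \<in> K \<Longrightarrow> P x = x" by (rule orth_proj_id[OF Ks])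
lemma P0: "P x = 0 \<longleftrightarrow> (\<forall>z\<in>K. inner x z = 0)" by (rule orth_proj_zero_iff[OF Ks])
lemma Pperp: "P (x - P x) = 0" by (rule orth_proj_perp[OF Ks])
lemma Psym: "inner (P x) y = inner x (P y)" by (rule orth_proj_sym[OF Ks])

lemma dimK: "dim K < DIM('a)"
proof -
  have "dim K \<le> DIM('a)" by (metis dim_subset_UNIV)
  moreover have "dim K \<noteq> DIM('a)"
  proof
    assume "dim K = DIM('a)"
    then have "span K = UNIV" using dim_eq_full by metis
    then show False using KU Ks by (metis span_eq_iff)
  qed
  ultimately show ?thesis by simp
qed

lemma kpos: "kk > 0" using dimK by (simp add: codim_def)

lemma C_def2: "C x = (1/kk) *\<^sub>R (x - P x)" by (simp add: chibar_def)

lemma C_K: "x \<in> K \<Longrightarrow> C x = 0" by (simp add: C_def2 Pid)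
lemma C_perp: "P x = 0 \<Longrightarrow> C x = (1/kk) *\<^sub>R x" by (simp add: C_def2)
lemma P_C: "P (C x) = 0" unfolding C_def2 by (simp add: orth_proj_scale[OF Ks] Pperp)

lemma C_lin: "linear C"
  unfolding C_def2 by (rule linearI) (auto simp: linear_add[OF Plin] linear_scale[OF Plin] algebra_simps)

lemma C_sym: "inner (C x) y = inner x (C y)"
  unfolding C_def2 by (simp add: inner_diff_left inner_diff_right Psym)

lemma trace_C: "trace_op C = 1"
proof -
  have e: "inner (C b) b = (1/kk) * (1 - inner (P b) b)" if "b \<in> Basis" for b
    using that by (simp add: C_def2 inner_diff_left)
  have "trace_op C = (1/kk) * (\<Sum>b\<in>Basis. 1 - inner (P b) b)"
    unfolding trace_op_def by (simp add: e sum_distrib_left)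
  also have "(\<Sum>b\<in>Basis. 1 - inner (P b) b) = real DIM('a) - real (dim K)"
    by (simp add: sum_subtractf trace_proj[OF Ks])
  finally show ?thesis using dimK kpos by (simp add: codim_def of_nat_diff)
qed

definition basic :: "('a \<Rightarrow> 'a) \<Rightarrow> bool" where
  "basic A \<longleftrightarrow> linear A \<and> (\<forall>x y. inner (A x) y = inner x (A y)) \<and> (\<forall>x\<in>K. A x = 0)
     \<and> (\<forall>X\<in>K. \<forall>y. A (br X y) = br X (A y))"

lemma D_basic: "A \<in> Dset br Aut K \<Longrightarrow> basic A"
  by (simp add: Dset_def basic_def symmetric_op_def)

context fixes A assumes bA: "basic A"
begin

lemma Alin: "linear A" using bA by (simp add: basic_def)
lemma Asym: "inner (A x) y = inner x (A y)" using bA by (simp add: basic_def)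
lemma AK: "x \<in> K \<Longrightarrow> A x = 0" using bA by (simp add: basic_def)
lemma Abr: "X \<in> K \<Longrightarrow> A (br X y) = br X (A y)" using bA by (simp add: basic_def)
lemma P_A: "P (A x) = 0" unfolding P0 by (simp add: Asym AK)
lemma A_P: "A (P x) = 0" by (simp add: AK Pin)
lemma A_Q: "A (x - P x) = A x" by (simp add: linear_diff[OF Alin] A_P)

definition At :: "real \<Rightarrow> 'a \<Rightarrow> 'a" where
  "At t = (\<lambda>x. t *\<^sub>R (A x - C x) + C x)"

lemma At_lin: "linear (At t)"
  unfolding At_def by (rule linearI) (auto simp: linear_add[OF Alin] linear_scale[OF Alin]
     linear_add[OF C_lin] linear_scale[OF C_lin] algebra_simps)

lemma At_sym: "inner (At t x) y = inner x (At t y)"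
  unfolding At_def by (simp add: inner_diff_left inner_diff_right inner_add_left inner_add_right Asym C_sym)

lemma At_sym_all: "\<forall>x y. inner (At t x) y = inner x (At t y)" using At_sym by blast

lemma At_sop: "symmetric_op (At t)" using At_lin At_sym by (simp add: symmetric_op_def)

lemma At_1: "At 1 = A" by (simp add: At_def)

lemma At_0: "At 0 = C" by (simp add: At_def)

lemma trace_At: "trace_op (At t) = t * (trace_op A - trace_op C) + trace_op C"
  unfolding trace_op_def At_def
  by (simp add: inner_add_left inner_diff_left sum.distrib sum_subtractf sum_distrib_left algebra_simps)

definition pv :: "real \<Rightarrow> 'a \<Rightarrow> real \<Rightarrow> bool" where
  "pv t x v \<longleftrightarrow> x \<noteq> 0 \<and> ((x \<in> K \<and> v = 0) \<or> (P x = 0 \<and> (\<exists>l. A x = l *\<^sub>R x \<and> v = t*l + (1-t)/kk)))"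

lemma pv_eig: "pv t x v \<Longrightarrow> eigv (At t) x v"
  unfolding pv_def eigv_def At_def
proof (elim conjE disjE exE)
  assume "x \<noteq> 0" "x \<in> K" "v = 0" then show "x \<noteq> 0 \<and> t *\<^sub>R (A x - C x) + C x = v *\<^sub>R x"
    by (simp add: AK C_K)
next
  fix l assume H: "x \<noteq> 0" "P x = 0" "A x = l *\<^sub>R x" "v = t * l + (1 - t) / kk"
  have "t *\<^sub>R (A x - C x) + C x = t *\<^sub>R (l *\<^sub>R x - (1/kk) *\<^sub>R x) + (1/kk) *\<^sub>R x"
    using H by (simp add: C_perp)
  also have "\<dots> = (t*(l - 1/kk) + 1/kk) *\<^sub>R x"
    by (simp only: scaleR_diff_left[symmetric] scaleR_scaleR scaleR_add_left[symmetric])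
  also have "t*(l - 1/kk) + 1/kk = v" using H kpos by (simp add: field_simps)
  finally show "x \<noteq> 0 \<and> t *\<^sub>R (A x - C x) + C x = v *\<^sub>R x" using H by simp
qed

lemma pv_affine: assumes "pv t x v" shows "\<exists>v0 v1. v = v0 + t * v1 \<and> (\<forall>s. pv s x (v0 + s * v1))
   \<and> ((v0 = 0 \<and> x \<in> K) \<or> (v0 = 1/kk \<and> P x = 0))"
  using assms[unfolded pv_def]
proof (elim conjE disjE exE)
  assume "x \<noteq> 0" "x \<in> K" "v = 0" then show ?thesis by (intro exI[of _ 0]) (auto simp: pv_def)
next
  fix l assume H: "x \<noteq> 0" "P x = 0" "A x = l *\<^sub>R x" "v = t * l + (1 - t) / kk"
  show ?thesis
    apply (rule exI[of _ "1/kk"], rule exI[of _ "l - 1/kk"])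
    using H kpos by (auto simp: pv_def field_simps)
qed

lemma eig_decomp:
  assumes t: "t \<noteq> 0" and e: "eigv (At t) x a"
  shows "\<exists>x1 x2. x = x1 + x2 \<and> (x1 = 0 \<or> pv t x1 a) \<and> (x2 = 0 \<or> pv t x2 a)"
proof -
  define x2 where "x2 = x - P x"
  have Px2: "P x2 = 0" by (simp add: x2_def Pperp)
  have Cx: "C x = (1/kk) *\<^sub>R x2" by (simp add: C_def2 x2_def)
  have Ax: "A x = A x2" by (simp add: x2_def A_Q)
  have Atx: "At t x = t *\<^sub>R A x2 + ((1-t)/kk) *\<^sub>R x2"
    by (simp add: At_def Cx Ax algebra_simps scaleR_diff_left diff_divide_distrib)
  have "P (At t x) = 0"
    unfolding Atx by (simp add: linear_add[OF Plin] linear_scale[OF Plin] P_A Px2)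
  moreover have "At t x = a *\<^sub>R x" using e by (simp add: eigv_def)
  ultimately have aPx: "a *\<^sub>R P x = 0" by (simp add: orth_proj_scale[OF Ks])
  have "a *\<^sub>R x2 = a *\<^sub>R x" using aPx by (simp add: x2_def scaleR_diff_right)
  then have eq: "t *\<^sub>R A x2 + ((1-t)/kk) *\<^sub>R x2 = a *\<^sub>R x2" using Atx \<open>At t x = a *\<^sub>R x\<close> by metis
  have Ax2: "A x2 = ((a - (1-t)/kk)/t) *\<^sub>R x2"
  proof -
    have "t *\<^sub>R A x2 = (a - (1-t)/kk) *\<^sub>R x2" using eq by (simp add: algebra_simps scaleR_diff_left)
    then have "(1/t) *\<^sub>R (t *\<^sub>R A x2) = (1/t) *\<^sub>R ((a - (1-t)/kk) *\<^sub>R x2)" by simp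
    then show ?thesis using t by (simp add: divide_inverse mult.commute)
  qed
  have p2: "x2 = 0 \<or> pv t x2 a"
  proof (cases "x2 = 0")
    case False
    have "a = t * ((a - (1-t)/kk)/t) + (1-t)/kk" using t by simp
    then show ?thesis unfolding pv_def using False Px2 Ax2 by blast
  qed simp
  have p1: "P x = 0 \<or> pv t (P x) a"
    unfolding pv_def using aPx Pin by auto
  show ?thesis using p1 p2 by (intro exI[of _ "P x"] exI[of _ x2]) (auto simp: x2_def)
qed

lemma ns_pv:
  assumes t: "t \<noteq> 0"
  shows "nonneg_spectrum (At t) \<longleftrightarrow> (\<forall>x a. pv t x a \<longrightarrow> a \<ge> 0)"
proof
  assume "nonneg_spectrum (At t)" then show "\<forall>x a. pv t x a \<longrightarrow> a \<ge> 0"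
    using pv_eig unfolding nonneg_spectrum_def eigv_def by blast
next
  assume H: "\<forall>x a. pv t x a \<longrightarrow> a \<ge> 0"
  show "nonneg_spectrum (At t)" unfolding nonneg_spectrum_def
  proof (intro allI impI)
    fix c v assume "v \<noteq> 0 \<and> At t v = c *\<^sub>R v"
    then obtain x1 x2 where "v = x1 + x2" "x1 = 0 \<or> pv t x1 c" "x2 = 0 \<or> pv t x2 c"
      using eig_decomp[OF t, of v c] by (auto simp: eigv_def)
    then show "c \<ge> 0" using H \<open>v \<noteq> 0 \<and> At t v = c *\<^sub>R v\<close> by auto
  qed
qed

lemma filt_pv:
  assumes t: "t \<noteq> 0"
  shows "filtering br (At t) \<longleftrightarrow> (\<forall>x y z a b c. pv t x a \<and> pv t y b \<and> pv t z c \<and> c > a + b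
      \<longrightarrow> inner (br x y) z = 0)"
proof
  assume "filtering br (At t)"
  then show "\<forall>x y z a b c. pv t x a \<and> pv t y b \<and> pv t z c \<and> c > a + b \<longrightarrow> inner (br x y) z = 0"
    using filtering_iff[OF At_lin At_sym_all brb, of t] pv_eig by blast
next
  assume H: "\<forall>x y z a b c. pv t x a \<and> pv t y b \<and> pv t z c \<and> c > a + b \<longrightarrow> inner (br x y) z = 0"
  have "inner (br x y) z = 0" if ex: "eigv (At t) x a" and ey: "eigv (At t) y b" and ez: "eigv (At t) z c"
    and abc: "c > a + b" for x y z a b c
  proof -
    obtain x1 x2 where x: "x = x1 + x2" "x1 = 0 \<or> pv t x1 a" "x2 = 0 \<or> pv t x2 a"
      using eig_decomp[OF t ex] by blast
    obtain y1 y2 where y: "y = y1 + y2" "y1 = 0 \<or> pv t y1 b" "y2 = 0 \<or> pv t y2 b"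
      using eig_decomp[OF t ey] by blast
    obtain z1 z2 where z: "z = z1 + z2" "z1 = 0 \<or> pv t z1 c" "z2 = 0 \<or> pv t z2 c"
      using eig_decomp[OF t ez] by blast
    have Z: "inner (br u v) w = 0" if "u = 0 \<or> pv t u a" "v = 0 \<or> pv t v b" "w = 0 \<or> pv t w c" for u v w
    proof -
      have H': "\<And>x y z a b c. pv t x a \<Longrightarrow> pv t y b \<Longrightarrow> pv t z c \<Longrightarrow> c > a + b \<Longrightarrow> inner (br x y) z = 0"
        using H by blast
      show ?thesis using that
        by (elim disjE) (auto simp: bilinear_lzero[OF brb] bilinear_rzero[OF brb] intro: H' abc)
    qed
    show ?thesis unfolding x(1) y(1) z(1)
      using Z[OF x(2) y(2) z(2)] Z[OF x(2) y(2) z(3)] Z[OF x(2) y(3) z(2)] Z[OF x(2) y(3) z(3)]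
        Z[OF x(3) y(2) z(2)] Z[OF x(3) y(2) z(3)] Z[OF x(3) y(3) z(2)] Z[OF x(3) y(3) z(3)]
      by (simp add: bilinear_ladd[OF brb] bilinear_radd[OF brb] inner_add_left inner_add_right)
  qed
  then show "filtering br (At t)"
    using filtering_iff[OF At_lin At_sym_all brb, of t] by blast
qed

end
end

lemma affine_near:
  fixes h0 h1 T :: real
  assumes "h0 + T * h1 > 0" "T > 0"
  shows "\<exists>s. 0 < s \<and> s < T \<and> h0 + s * h1 > 0"
proof (cases "h1 \<le> 0")
  case True
  have "T * h1 \<le> 0" using True assms(2) mult_nonneg_nonpos[of T h1] by simp
  moreover have "T/2 * h1 = (T*h1)/2" by simp
  ultimately have "h0 + T/2 * h1 > 0" using assms by linarith
  then show ?thesis using assms by (intro exI[of _ "T/2"]) auto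
next
  case False
  define s where "s = max (T/2) (T - (h0 + T*h1)/(2*h1))"
  have s1: "s < T" using False assms by (simp add: s_def)
  have s2: "0 < s" using assms by (simp add: s_def)
  have "s \<ge> T - (h0 + T*h1)/(2*h1)" by (simp add: s_def)
  then have e1: "s * h1 \<ge> (T - (h0 + T*h1)/(2*h1)) * h1" using False by (simp add: mult_right_mono)
  have e2: "(T - (h0 + T*h1)/(2*h1)) * h1 = T*h1 - (h0+T*h1)/2" using False by (simp add: field_simps)
  have e3: "s * h1 \<ge> T*h1 - (h0+T*h1)/2" using e1 e2 by metis
  have "h0 + s * h1 > 0" using e3 assms(1) by argo
  then show ?thesis using s1 s2 by blast
qed

lemma affine_mono:
  fixes h0 h1 s t :: real
  assumes "h0 \<le> 0" "h0 + s * h1 > 0" "0 < s" "s \<le> t"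
  shows "h0 + t * h1 > 0"
proof -
  have "s * h1 > 0" using assms by linarith
  then have "h1 > 0" using assms(3) by (simp add: zero_less_mult_iff)
  then have "t * h1 \<ge> s * h1" using assms by (simp add: mult_right_mono)
  then show ?thesis using assms by linarith
qed

lemma affine_mono2:
  fixes h0 h1 s t :: real
  assumes "h0 \<ge> 0" "h0 + t * h1 \<ge> 0" "0 < s" "s \<le> t"
  shows "h0 + s * h1 \<ge> 0"
proof (cases "h1 \<ge> 0")
  case True then show ?thesis using assms by simp
next
  case False
  then have "s * h1 \<ge> t * h1" using assms by (simp add: mult_right_mono_neg)
  then show ?thesis using assms by linarith
qed

context LS begin

lemma C_eig: "eigv C x a \<Longrightarrow> (a = 0 \<and> x \<in> K) \<or> (a = 1/kk \<and> P x = 0)"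
proof -
  assume e: "eigv C x a"
  then have x0: "x \<noteq> 0" and Cx: "C x = a *\<^sub>R x" by (auto simp: eigv_def)
  have "P (a *\<^sub>R x) = 0" using P_C Cx by metis
  then have aP: "a *\<^sub>R P x = 0" by (simp add: orth_proj_scale[OF Ks])
  show ?thesis
  proof (cases "a = 0")
    case True
    then have "x - P x = 0" using Cx kpos by (simp add: C_def2)
    then have "x \<in> K" using Pin by (metis eq_iff_diff_eq_0)
    then show ?thesis using True by simp
  next
    case False
    then have "P x = 0" using aP by simp
    then have "C x = (1/kk) *\<^sub>R x" by (rule C_perp)
    then have "(a - 1/kk) *\<^sub>R x = 0" using Cx by (simp add: scaleR_diff_left)
    then show ?thesis using x0 \<open>P x = 0\<close> by simp
  qed
qed

lemma perpK: "P z = 0 \<Longrightarrow> w \<in> K \<Longrightarrow> inner w z = 0"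
  using P0 by (simp add: inner_commute)

lemma C_F: "C \<in> Fplus br"
proof -
  have sym: "\<forall>x y. inner (C x) y = inner x (C y)" using C_sym by blast
  have ns: "nonneg_spectrum C" unfolding nonneg_spectrum_def
  proof (intro allI impI)
    fix c v assume "v \<noteq> 0 \<and> C v = c *\<^sub>R v"
    then have "eigv C v c" by (simp add: eigv_def)
    then show "c \<ge> 0" using C_eig kpos by fastforce
  qed
  have f: "filtering br C" unfolding filtering_iff[OF C_lin sym brb]
  proof (intro allI impI, elim conjE)
    fix x y z a b c assume ex: "eigv C x a" and ey: "eigv C y b" and ez: "eigv C z c" and abc: "a + b < c"
    have ha: "(a = 0 \<and> x \<in> K) \<or> (a = 1/kk \<and> P x = 0)" by (rule C_eig[OF ex])
    have hb: "(b = 0 \<and> y \<in> K) \<or> (b = 1/kk \<and> P y = 0)" by (rule C_eig[OF ey])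
    have hc: "(c = 0 \<and> z \<in> K) \<or> (c = 1/kk \<and> P z = 0)" by (rule C_eig[OF ez])
    have k1: "1/kk > 0" using kpos by simp
    have a0: "a \<ge> 0" "b \<ge> 0" using ha hb k1 by auto
    have c1: "c = 1/kk" "P z = 0" using hc a0 abc by auto
    have "a \<noteq> 1/kk" "b \<noteq> 1/kk" using a0 abc c1 by auto
    then have "x \<in> K" "y \<in> K" using ha hb by auto
    then show "inner (br x y) z = 0" using perpK[OF c1(2)] brK by blast
  qed
  show ?thesis using ns f trace_C C_lin sym by (simp add: Fplus_def symmetric_op_def)
qed

lemma ray:
  assumes bA: "basic A" and s: "0 < s" "s \<le> t" and Ft: "At A t \<in> Fplus br"
  shows "At A s \<in> Fplus br"
proof -
  have t0: "t \<noteq> 0" "t > 0" using s by auto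
  have s0: "s \<noteq> 0" using s by auto
  have nst: "\<forall>x a. pv A t x a \<longrightarrow> a \<ge> 0" using Ft ns_pv[OF bA t0(1)] by (simp add: Fplus_def)
  have ft: "\<forall>x y z a b c. pv A t x a \<and> pv A t y b \<and> pv A t z c \<and> c > a + b \<longrightarrow> inner (br x y) z = 0"
    using Ft filt_pv[OF bA t0(1)] by (simp add: Fplus_def)
  have nss: "\<forall>x a. pv A s x a \<longrightarrow> a \<ge> 0"
  proof (intro allI impI)
    fix x a assume "pv A s x a"
    then obtain v0 v1 where v: "a = v0 + s * v1" "\<forall>r. pv A r x (v0 + r * v1)" "v0 = 0 \<or> v0 = 1/kk"
      using pv_affine[OF bA] by blast
    have "v0 \<ge> 0" using v(3) kpos by auto
    moreover have "v0 + t * v1 \<ge> 0" using nst v(2) by blast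
    ultimately show "a \<ge> 0" using affine_mono2[OF _ _ s] v(1) by blast
  qed
  have fs: "filtering br (At A s)" unfolding filt_pv[OF bA s0]
  proof (intro allI impI, elim conjE)
    fix x y z a b c assume px: "pv A s x a" and py: "pv A s y b" and pz: "pv A s z c" and abc: "a + b < c"
    obtain x0 x1 where X: "a = x0 + s * x1" "\<forall>r. pv A r x (x0 + r * x1)" "(x0 = 0 \<and> x \<in> K) \<or> (x0 = 1/kk \<and> P x = 0)"
      using pv_affine[OF bA px] by blast
    obtain y0 y1 where Y: "b = y0 + s * y1" "\<forall>r. pv A r y (y0 + r * y1)" "(y0 = 0 \<and> y \<in> K) \<or> (y0 = 1/kk \<and> P y = 0)"
      using pv_affine[OF bA py] by blast
    obtain z0 z1 where Z: "c = z0 + s * z1" "\<forall>r. pv A r z (z0 + r * z1)" "(z0 = 0 \<and> z \<in> K) \<or> (z0 = 1/kk \<and> P z = 0)"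
      using pv_affine[OF bA pz] by blast
    show "inner (br x y) z = 0"
    proof (cases "x \<in> K \<and> y \<in> K \<and> P z = 0")
      case True
      then show ?thesis using perpK brK by blast
    next
      case False
      have k1: "1/kk > 0" using kpos by simp
      have x0: "x0 \<ge> 0" "x \<notin> K \<longrightarrow> x0 = 1/kk" using X(3) k1 by auto
      have y0: "y0 \<ge> 0" "y \<notin> K \<longrightarrow> y0 = 1/kk" using Y(3) k1 by auto
      have z0: "z0 = 0 \<or> (z0 = 1/kk \<and> P z = 0)" using Z(3) by auto
      have h0: "z0 - x0 - y0 \<le> 0"
      proof (cases "z0 = 0")
        case True then show ?thesis using x0 y0 by simp
      next
        case False
        then have "z0 = 1/kk" "P z = 0" using z0 by auto
        then have "x \<notin> K \<or> y \<notin> K" using False \<open>\<not> (x \<in> K \<and> y \<in> K \<and> P z = 0)\<close> by blast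
        then show ?thesis using x0 y0 \<open>z0 = 1/kk\<close> by auto
      qed
      have "(z0 - x0 - y0) + s * (z1 - x1 - y1) > 0" using abc X(1) Y(1) Z(1) by (simp add: algebra_simps)
      then have "(z0 - x0 - y0) + t * (z1 - x1 - y1) > 0" using affine_mono[OF h0 _ s] by blast
      then have "z0 + t * z1 > (x0 + t * x1) + (y0 + t * y1)" by (simp add: algebra_simps)
      then show ?thesis using ft X(2) Y(2) Z(2) by blast
    qed
  qed
  have trA: "trace_op A = 1"
  proof -
    have "trace_op (At A t) = 1" using Ft by (simp add: Fplus_def)
    then have "t * (trace_op A - 1) = 0" using trace_At[OF bA, of t] trace_C by simp
    then show ?thesis using t0 by simp
  qed
  have "trace_op (At A s) = 1" using trace_At[OF bA, of s] trace_C trA by simp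
  then show ?thesis using At_sop[OF bA] fs nss ns_pv[OF bA s0] by (simp add: Fplus_def)
qed

lemma closure_F:
  assumes bA: "basic A" and T: "T > 0" and F: "\<forall>s. 0 < s \<and> s < T \<longrightarrow> At A s \<in> Fplus br"
  shows "At A T \<in> Fplus br"
proof -
  have T0: "T \<noteq> 0" using T by auto
  have sF: "At A s \<in> Fplus br" "s \<noteq> 0" if "0 < s" "s < T" for s using F that by auto
  have nsT: "\<forall>x a. pv A T x a \<longrightarrow> a \<ge> 0"
  proof (intro allI impI)
    fix x a assume "pv A T x a"
    then obtain v0 v1 where v: "a = v0 + T * v1" "\<forall>r. pv A r x (v0 + r * v1)"
      using pv_affine[OF bA] by blast
    show "a \<ge> 0"
    proof (rule ccontr)
      assume "\<not> a \<ge> 0"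
      then have "(- v0) + T * (- v1) > 0" using v(1) by simp
      then obtain s where s: "0 < s" "s < T" "(- v0) + s * (- v1) > 0" using affine_near[OF _ T] by blast
      have "\<forall>x a. pv A s x a \<longrightarrow> a \<ge> 0" using sF[OF s(1,2)] ns_pv[OF bA] by (simp add: Fplus_def)
      then have "v0 + s * v1 \<ge> 0" using v(2) by blast
      then show False using s(3) by simp
    qed
  qed
  have fT: "filtering br (At A T)" unfolding filt_pv[OF bA T0]
  proof (intro allI impI, elim conjE)
    fix x y z a b c assume px: "pv A T x a" and py: "pv A T y b" and pz: "pv A T z c" and abc: "a + b < c"
    obtain x0 x1 where X: "a = x0 + T * x1" "\<forall>r. pv A r x (x0 + r * x1)"
      using pv_affine[OF bA px] by blast
    obtain y0 y1 where Y: "b = y0 + T * y1" "\<forall>r. pv A r y (y0 + r * y1)"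
      using pv_affine[OF bA py] by blast
    obtain z0 z1 where Z: "c = z0 + T * z1" "\<forall>r. pv A r z (z0 + r * z1)"
      using pv_affine[OF bA pz] by blast
    have "(z0 - x0 - y0) + T * (z1 - x1 - y1) > 0" using abc X(1) Y(1) Z(1) by (simp add: algebra_simps)
    then obtain s where s: "0 < s" "s < T" "(z0 - x0 - y0) + s * (z1 - x1 - y1) > 0"
      using affine_near[OF _ T] by blast
    have fs: "\<forall>x y z a b c. pv A s x a \<and> pv A s y b \<and> pv A s z c \<and> c > a + b \<longrightarrow> inner (br x y) z = 0"
      using sF[OF s(1,2)] filt_pv[OF bA] by (simp add: Fplus_def)
    have "z0 + s * z1 > (x0 + s * x1) + (y0 + s * y1)" using s(3) by (simp add: algebra_simps)
    then show "inner (br x y) z = 0" using fs X(2) Y(2) Z(2) by blast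
  qed
  have trA: "trace_op A = 1"
  proof -
    have "trace_op (At A (T/2)) = 1" using sF[of "T/2"] T by (simp add: Fplus_def)
    then have "(T/2) * (trace_op A - 1) = 0" using trace_At[OF bA, of "T/2"] trace_C by simp
    then show ?thesis using T by simp
  qed
  have "trace_op (At A T) = 1" using trace_At[OF bA, of T] trace_C trA by simp
  then show ?thesis using At_sop[OF bA] fT nsT ns_pv[OF bA T0] by (simp add: Fplus_def)
qed

end

context LS begin

lemma kk_ge1: "kk \<ge> 1" using kpos by (simp add: codim_def)

lemma sum_sq_basis: "(\<Sum>b\<in>Basis. inner b v * inner b v) = inner v v"
  by (simp add: euclidean_inner[of v v] inner_commute)

lemma bound_unit:
  assumes bA: "basic A" and trA: "trace_op A = 1"
   and v: "norm v = 1" "P v = 0" "A v = nu *\<^sub>R v"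
   and w: "norm w = 1" "P w = 0" "A w = mu *\<^sub>R w" and vw: "inner v w = 0"
  shows "(nu - 1/kk) - 2*(mu - 1/kk) \<le> sqrt (5 - 1/kk) * op_norm_tr (\<lambda>x. A x - C x)"
proof -
  define B where "B = (\<lambda>x. A x - C x)"
  have Bsym: "inner (B x) y = inner x (B y)" for x y
    by (simp add: B_def inner_diff_left inner_diff_right Asym[OF bA] C_sym)
  have PB: "P (B x) = 0" for x
    by (simp add: B_def linear_diff[OF Plin] P_A[OF bA] P_C)
  have Bv: "B v = (nu - 1/kk) *\<^sub>R v" using v by (simp add: B_def C_perp scaleR_diff_left)
  have Bw: "B w = (mu - 1/kk) *\<^sub>R w" using w by (simp add: B_def C_perp scaleR_diff_left)
  have vv: "inner v v = 1" "inner w w = 1" using v w by (simp_all add: norm_eq_1)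
  have vP: "inner v (P b) = 0" "inner w (P b) = 0" for b
    using v w by (simp_all add: Psym[symmetric])
  have e1: "(\<Sum>b\<in>Basis. inner (B b) b) = (\<Sum>b\<in>Basis. inner (A b) b) - (\<Sum>b\<in>Basis. inner (C b) b)"
    by (simp add: B_def inner_diff_left sum_subtractf)
  have e2: "(\<Sum>b\<in>Basis. inner (A b) b) = 1" using trA by (simp only: trace_op_def)
  have e3: "(\<Sum>b\<in>Basis. inner (C b) b) = 1" using trace_C by (simp only: trace_op_def)
  have trB: "(\<Sum>b\<in>Basis. inner (B b) b) = 0" using e1 e2 e3 by linarith
  define CC where "CC x = inner x v *\<^sub>R v - (2 * inner x w) *\<^sub>R w + (1/kk) *\<^sub>R (x - P x)" for x
  have t1: "inner (CC b) (B b) = (nu - 1/kk) * (inner b v * inner b v) - 2 * (mu - 1/kk) * (inner b w * inner b w)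
     + (1/kk) * inner (B b) b" for b
  proof -
    have a1: "inner v (B b) = (nu - 1/kk) * inner b v" using Bsym[of v b] Bv by (simp add: inner_commute)
    have a2: "inner w (B b) = (mu - 1/kk) * inner b w" using Bsym[of w b] Bw by (simp add: inner_commute)
    have a3: "inner (P b) (B b) = 0" using Psym[of b "B b"] PB by simp
    show ?thesis unfolding CC_def
      by (simp add: inner_add_left inner_diff_left a1 a2 a3 inner_commute[of b "B b"] algebra_simps)
  qed
  have trB': "(\<Sum>b\<in>Basis. inner (B b) b / kk) = 0" using trB by (simp add: sum_divide_distrib[symmetric])
  have S1: "(\<Sum>b\<in>Basis. inner (CC b) (B b)) = (nu - 1/kk) - 2*(mu - 1/kk)"
    unfolding t1 by (simp add: sum.distrib sum_subtractf sum_distrib_left[symmetric] sum_sq_basis vv trB trB')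
  have S2: "(\<Sum>b\<in>Basis. (norm (B b))^2) = trace_op (B \<circ> B)"
    unfolding trace_op_def by (simp add: power2_norm_eq_inner Bsym)
  have t3: "(norm (CC b))^2 = (1 + 2/kk) * (inner b v * inner b v) + (4 - 4/kk) * (inner b w * inner b w)
      + (1/kk^2) * (1 - inner (P b) b)" if b: "b \<in> Basis" for b
  proof -
    have q1: "inner v (b - P b) = inner b v" using vP by (simp add: inner_diff_right inner_commute)
    have q2: "inner w (b - P b) = inner b w" using vP by (simp add: inner_diff_right inner_commute)
    have q3: "inner (b - P b) (b - P b) = 1 - inner (P b) b"
    proof -
      have "inner (b - P b) (P b) = 0" using Porth[OF Pin] by simp
      then have "inner (b - P b) (b - P b) = inner (b - P b) b" by (simp add: inner_diff_right)
      then show ?thesis using b by (simp add: inner_diff_left)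
    qed
    have "(norm (CC b))^2 = inner (CC b) (CC b)" by (simp add: power2_norm_eq_inner)
    also have "\<dots> = (inner b v)^2 * inner v v + (2 * inner b w)^2 * inner w w + (1/kk)^2 * inner (b - P b) (b - P b)
       - 2 * (inner b v * (2 * inner b w)) * inner v w
       + 2 * (inner b v * (1/kk)) * inner v (b - P b)
       - 2 * ((2 * inner b w) * (1/kk)) * inner w (b - P b)"
    proof -
      have c1: "inner (P b) v = 0" "inner (P b) w = 0" "inner v (P b) = 0" "inner w (P b) = 0"
        using vP by (simp_all add: inner_commute)
      have c2: "inner v b = inner b v" "inner w b = inner b w" "inner w v = inner v w"
        by (simp_all add: inner_commute)
      show ?thesis
        unfolding CC_def by (simp add: inner_add_left inner_add_right inner_diff_left inner_diff_right
          c1 c2 power2_eq_square algebra_simps)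
    qed
    also have "\<dots> = (1 + 2/kk) * (inner b v * inner b v) + (4 - 4/kk) * (inner b w * inner b w)
      + (1/kk^2) * (1 - inner (P b) b)"
      unfolding q1 q2 q3 vv vw by (simp add: power2_eq_square algebra_simps)
    finally show ?thesis .
  qed
  have S3: "(\<Sum>b\<in>Basis. (norm (CC b))^2) = 5 - 1/kk"
  proof -
    have "(\<Sum>b\<in>Basis. (norm (CC b))^2) = (1 + 2/kk) * (\<Sum>b\<in>Basis. inner b v * inner b v)
       + (4 - 4/kk) * (\<Sum>b\<in>Basis. inner b w * inner b w) + (1/kk^2) * (\<Sum>b\<in>Basis. 1 - inner (P b) b)"
      by (simp add: t3 sum.distrib sum_distrib_left)
    also have "(\<Sum>b\<in>Basis. 1 - inner (P b) b) = kk"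
      using dimK by (simp add: sum_subtractf trace_proj[OF Ks] codim_def of_nat_diff)
    finally have X: "(\<Sum>b\<in>Basis. (norm (CC b))^2) = (1 + 2/kk) * (\<Sum>b\<in>Basis. inner b v * inner b v)
       + (4 - 4/kk) * (\<Sum>b\<in>Basis. inner b w * inner b w) + (1/kk^2) * kk" .
    have Y: "(1 + 2/kk) * 1 + (4 - 4/kk) * 1 + (1/kk^2) * kk = 5 - 1/kk"
      using kpos by (simp add: power2_eq_square field_simps)
    show ?thesis using X Y sum_sq_basis[of v] sum_sq_basis[of w] vv by simp
  qed
  have "(\<Sum>b\<in>Basis. inner (CC b) (B b)) \<le> (\<Sum>b\<in>Basis. norm (CC b) * norm (B b))"
    by (rule sum_mono) (rule norm_cauchy_schwarz)
  also have "\<dots> \<le> sqrt ((\<Sum>b\<in>Basis. (norm (CC b))^2) * (\<Sum>b\<in>Basis. (norm (B b))^2))"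
    by (rule real_le_rsqrt) (rule Cauchy_Schwarz_ineq_sum)
  also have "\<dots> = sqrt (5 - 1/kk) * op_norm_tr B"
    unfolding S3 S2 op_norm_tr_def by (simp add: real_sqrt_mult)
  finally show ?thesis using S1 by (simp add: B_def)
qed

lemma bound:
  assumes bA: "basic A" and trA: "trace_op A = 1"
   and R: "op_norm_tr (\<lambda>x. A x - C x) \<le> 1 / (kk * sqrt (5 - 1 / kk))"
   and v: "v \<noteq> 0" "P v = 0" "A v = nu *\<^sub>R v"
   and w: "w \<noteq> 0" "P w = 0" "A w = mu *\<^sub>R w" and ne: "nu \<noteq> mu"
  shows "nu \<le> 2 * mu"
proof -
  define v' where "v' = v /\<^sub>R norm v"
  define w' where "w' = w /\<^sub>R norm w"
  have v': "norm v' = 1" "P v' = 0" "A v' = nu *\<^sub>R v'"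
    using v by (auto simp: v'_def orth_proj_scale[OF Ks] linear_scale[OF Alin[OF bA]])
  have w': "norm w' = 1" "P w' = 0" "A w' = mu *\<^sub>R w'"
    using w by (auto simp: w'_def orth_proj_scale[OF Ks] linear_scale[OF Alin[OF bA]])
  have "inner v' w' = 0" using eig_orth[of A v' nu w' mu] Asym[OF bA] v'(3) w'(3) ne by blast
  then have h: "(nu - 1/kk) - 2*(mu - 1/kk) \<le> sqrt (5 - 1/kk) * op_norm_tr (\<lambda>x. A x - C x)"
    using bound_unit[OF bA trA v' w'] by blast
  have k5: "5 - 1/kk > 0" using kk_ge1 by (simp add: field_simps)
  then have sq: "sqrt (5 - 1/kk) > 0" by simp
  have "sqrt (5 - 1/kk) * op_norm_tr (\<lambda>x. A x - C x) \<le> sqrt (5 - 1/kk) * (1 / (kk * sqrt (5 - 1 / kk)))"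
    by (rule mult_left_mono[OF R]) (use sq in simp)
  also have "\<dots> = 1/kk" using sq kpos by simp
  finally show ?thesis using h by simp
qed

lemma ball:
  assumes A: "A \<in> Dset br Aut K"
   and R: "op_norm_tr (\<lambda>x. A x - C x) \<le> 1 / (kk * sqrt (5 - 1 / kk))"
  shows "A \<in> Fplus br"
proof -
  have bA: "basic A" by (rule D_basic[OF A])
  have ns: "nonneg_spectrum A" and trA: "trace_op A = 1" and sA: "symmetric_op A"
    using A by (auto simp: Dset_def)
  have At1: "At A 1 = A" by (rule At_1[OF bA])
  have pos: "a \<ge> 0" if "pv A 1 x a" for x a
    using ns pv_eig[OF bA that] At1 by (auto simp: nonneg_spectrum_def eigv_def)
  have pv1: "pv A 1 x a \<longleftrightarrow> x \<noteq> 0 \<and> ((x \<in> K \<and> a = 0) \<or> (P x = 0 \<and> A x = a *\<^sub>R x))" for x a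
    using pv_def[where A=A and t=1 and x=x and v=a] bA by auto
  have f: "filtering br (At A 1)" unfolding filt_pv[OF bA one_neq_zero]
  proof (intro allI impI, elim conjE)
    fix x y z a b c assume px: "pv A 1 x a" and py: "pv A 1 y b" and pz: "pv A 1 z c" and abc: "a + b < c"
    have a0: "a \<ge> 0" "b \<ge> 0" using pos px py by auto
    have hz: "z \<noteq> 0" "P z = 0" "A z = c *\<^sub>R z"
      using pz abc a0 unfolding pv1 by auto
    have hx: "x \<in> K \<and> a = 0 \<or> (x \<noteq> 0 \<and> P x = 0 \<and> A x = a *\<^sub>R x)" using px pv1 by auto
    have hy: "y \<in> K \<and> b = 0 \<or> (y \<noteq> 0 \<and> P y = 0 \<and> A y = b *\<^sub>R y)" using py pv1 by auto
    show "inner (br x y) z = 0"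
    proof (cases "x \<in> K")
      case xK: True
      show ?thesis
      proof (cases "y \<in> K")
        case True then show ?thesis using xK perpK[OF hz(2)] brK by blast
      next
        case False
        then have yP: "A y = b *\<^sub>R y" using hy by auto
        have "A (br x y) = b *\<^sub>R br x y"
          using Abr[OF bA xK] yP linear_scale[OF br_lin] by simp
        moreover have "b \<noteq> c" using abc a0 by auto
        ultimately show ?thesis using eig_orth[of A "br x y" b z c] Asym[OF bA] hz(3) by blast
      qed
    next
      case xnK: False
      then have xP: "x \<noteq> 0" "P x = 0" "A x = a *\<^sub>R x" using hx by auto
      show ?thesis
      proof (cases "y \<in> K")
        case yK: True
        have "A (br y x) = a *\<^sub>R br y x"
          using Abr[OF bA yK] xP(3) linear_scale[OF br_lin] by simp
        moreover have "a \<noteq> c" using abc a0 by auto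
        ultimately have "inner (br y x) z = 0" using eig_orth[of A "br y x" a z c] Asym[OF bA] hz(3) by blast
        then show ?thesis by (simp add: anti[of x y])
      next
        case False
        then have yP: "y \<noteq> 0" "P y = 0" "A y = b *\<^sub>R y" using hy by auto
        have "c \<le> a + b"
        proof (cases "c = a \<or> c = b")
          case True then show ?thesis using a0 by auto
        next
          case False
          have "c \<le> 2 * a" using bound[OF bA trA R hz xP] False by auto
          moreover have "c \<le> 2 * b" using bound[OF bA trA R hz yP] False by auto
          ultimately show ?thesis by simp
        qed
        then show ?thesis using abc by simp
      qed
    qed
  qed
  show ?thesis using f At1 ns trA sA by (simp add: Fplus_def)
qed

end

context LS begin

lemma unbounded:
  assumes bA: "basic A" and trA: "trace_op A = 1" and ne: "A \<noteq> C"
  shows "\<exists>T. \<forall>t>T. At A t \<notin> Fplus br"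
proof -
  define B where "B = (\<lambda>x. A x - C x)"
  have Blin: "linear B" unfolding B_def
    by (rule linearI) (auto simp: linear_add[OF Alin[OF bA]] linear_scale[OF Alin[OF bA]]
      linear_add[OF C_lin] linear_scale[OF C_lin] algebra_simps)
  have Bsym: "\<forall>x y. inner (B x) y = inner x (B y)"
    by (simp add: B_def inner_diff_left inner_diff_right Asym[OF bA] C_sym)
  have PB: "P (B x) = 0" for x
    by (simp add: B_def linear_diff[OF Plin] P_A[OF bA] P_C)
  have BPb: "B (P x) = 0" for x by (simp add: B_def A_P[OF bA] C_K Pin)
  define Kp where "Kp = {x. P x = 0}"
  have Kp: "subspace Kp" unfolding Kp_def subspace_def
    by (auto simp: linear_add[OF Plin] linear_scale[OF Plin] linear_0[OF Plin])
  have inv: "\<forall>x\<in>Kp. B x \<in> Kp" using PB by (simp add: Kp_def)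
  have ninv: "\<forall>x\<in>Kp. (\<lambda>x. - B x) x \<in> Kp" using inv Kp by (simp add: subspace_neg)
  obtain x0 where x0: "x0 \<notin> K" using KU by blast
  define u0 where "u0 = x0 - P x0"
  have u0a: "u0 \<in> Kp" by (simp add: Kp_def u0_def Pperp)
  have u0b: "u0 \<noteq> 0"
  proof
    assume "u0 = 0"
    then have "x0 = P x0" by (simp add: u0_def)
    then show False using x0 Pin[of x0] by simp
  qed
  note u0 = u0a u0b
  have nlin: "linear (\<lambda>x. - B x)" using Blin by (simp add: linear_compose_neg)
  have nsym: "\<forall>x y. inner ((\<lambda>x. - B x) x) y = inner x ((\<lambda>x. - B x) y)" using Bsym by simp
  obtain u M where u: "u \<in> Kp" "u \<noteq> 0" "- B u = M *\<^sub>R u"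
    and Mb: "\<forall>x\<in>Kp. inner x (- B x) \<le> M * inner x x"
    using eig_exists[OF nlin nsym Kp ninv u0] by blast
  have e1: "(\<Sum>b\<in>Basis. inner (B b) b) = (\<Sum>b\<in>Basis. inner (A b) b) - (\<Sum>b\<in>Basis. inner (C b) b)"
    by (simp add: B_def inner_diff_left sum_subtractf)
  have e2: "(\<Sum>b\<in>Basis. inner (A b) b) = 1" using trA by (simp only: trace_op_def)
  have e3: "(\<Sum>b\<in>Basis. inner (C b) b) = 1" using trace_C by (simp only: trace_op_def)
  have trB: "(\<Sum>b\<in>Basis. inner (B b) b) = 0" using e1 e2 e3 by linarith
  have Mpos: "M > 0"
  proof (rule ccontr)
    assume "\<not> M > 0"
    then have M0: "M \<le> 0" by simp
    have psd: "\<forall>y\<in>Kp. 0 \<le> inner y (B y)"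
    proof
      fix y assume "y \<in> Kp"
      then have "inner y (- B y) \<le> M * inner y y" using Mb by blast
      moreover have "M * inner y y \<le> 0" using M0 by (simp add: mult_nonpos_nonneg)
      ultimately show "0 \<le> inner y (B y)" by (simp add: inner_minus_right)
    qed
    have Bb: "B b = B (b - P b)" "inner (B b) b = inner (b - P b) (B (b - P b))" for b
    proof -
      show bb: "B b = B (b - P b)" by (simp add: linear_diff[OF Blin] BPb)
      have "inner (P b) (B (b - P b)) = 0" using perpK[OF PB Pin] .
      then show "inner (B b) b = inner (b - P b) (B (b - P b))"
        unfolding bb by (simp add: inner_diff_left inner_commute)
    qed
    have qK: "b - P b \<in> Kp" for b by (simp add: Kp_def Pperp)
    have nn: "\<And>b. b \<in> Basis \<Longrightarrow> 0 \<le> inner (B b) b" using psd qK Bb(2) by simp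
    have "\<forall>b\<in>Basis. inner (B b) b = 0" using trB sum_nonneg_eq_0_iff[of Basis "\<lambda>b. inner (B b) b"] nn by simp
    then have z: "B b = 0" if "b \<in> Basis" for b
    proof -
      have "inner (b - P b) (B (b - P b)) = 0" using that \<open>\<forall>b\<in>Basis. inner (B b) b = 0\<close> Bb(2) by simp
      then have "inner (B (b - P b)) (B (b - P b)) = 0"
        using psd_zero[OF Blin Bsym Kp psd qK[of b] _ inv[rule_format, OF qK[of b]]] by blast
      then show ?thesis using Bb(1) by simp
    qed
    have lz: "linear (\<lambda>x::'a. 0::'a)" using bounded_linear_zero bounded_linear.linear by blast
    have "B = (\<lambda>x. 0)" by (rule linear_eq_stdbasis[OF Blin lz]) (auto simp: z)
    then have "B x = 0" for x by simp
    then have "A x = C x" for x unfolding B_def by simp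
    then have "A = C" by (rule ext)
    then show False using ne by simp
  qed
  have Au: "A u = (1/kk - M) *\<^sub>R u"
  proof -
    have "C u = (1/kk) *\<^sub>R u" using u(1) by (simp add: Kp_def C_perp)
    moreover have "A u = B u + C u" by (simp add: B_def)
    moreover have "B u = (- M) *\<^sub>R u" using u(3) by (metis minus_minus scaleR_minus_left)
    ultimately show ?thesis by (simp add: scaleR_diff_left)
  qed
  have "\<forall>t>1/(kk*M). At A t \<notin> Fplus br"
  proof (intro allI impI)
    fix t assume t: "t > 1/(kk*M)"
    have "1/(kk*M) > 0" using kpos Mpos by simp
    then have tpos: "t > 0" using t by linarith
    have "t * M > 1/kk" using t Mpos kpos by (simp add: field_simps)
    moreover have "t * (1/kk - M) + (1 - t)/kk = 1/kk - t * M" using kpos by (simp add: field_simps)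
    ultimately have neg: "t * (1/kk - M) + (1 - t)/kk < 0" by linarith
    have "pv A t u (t * (1/kk - M) + (1 - t)/kk)"
      using pv_def[where A=A and t=t and x=u and v="t * (1/kk - M) + (1 - t)/kk"] bA u(1,2) Au
      by (auto simp: Kp_def)
    then have "\<not> nonneg_spectrum (At A t)"
    proof -
      assume pvf: "pv A t u (t * (1/kk - M) + (1 - t)/kk)"
      have "t \<noteq> 0" using tpos by simp
      show ?thesis
      proof
        assume "nonneg_spectrum (At A t)"
        then have "\<forall>x a. pv A t x a \<longrightarrow> a \<ge> 0" using ns_pv[OF bA \<open>t \<noteq> 0\<close>] by simp
        then have "t * (1/kk - M) + (1 - t)/kk \<ge> 0" using pvf by blast
        then show False using neg by simp
      qed
    qed
    then show "At A t \<notin> Fplus br" by (simp add: Fplus_def)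
  qed
  then show ?thesis by blast
qed

lemma C_br: assumes X: "X \<in> K" shows "C (br X y) = br X (C y)"
proof -
  have "P (br X y) = br X (P y)"
  proof (rule orth_proj_eq[OF Ks])
    show "br X (P y) \<in> K" using brK[OF X Pin] .
    show "\<forall>z\<in>K. inner (br X y - br X (P y)) z = 0"
    proof
      fix z assume z: "z \<in> K"
      have "inner (br X y - br X (P y)) z = inner (br X (y - P y)) z" by (simp add: linear_diff[OF br_lin])
      also have "\<dots> = - inner (br (y - P y) X) z" by (subst anti) simp
      also have "\<dots> = - inner (y - P y) (br X z)" by (simp add: binv)
      also have "\<dots> = 0" using Porth brK[OF X z] by simp
      finally show "inner (br X y - br X (P y)) z = 0" .
    qed
  qed
  then show ?thesis by (simp add: C_def2 linear_diff[OF br_lin] linear_scale[OF br_lin])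
qed

lemma C_D:
  assumes Aut: "\<forall>f\<in>Aut. linear f \<and> (\<forall>x y. inner (f x) (f y) = inner x y) \<and> f ` K = K"
  shows "C \<in> Dset br Aut K"
proof -
  have comm: "C (f x) = f (C x)" if f: "f \<in> Aut" for f x
  proof -
    have lf: "linear f" and fi: "\<forall>x y. inner (f x) (f y) = inner x y" and fK: "f ` K = K" using Aut f by auto
    have "P (f x) = f (P x)"
    proof (rule orth_proj_eq[OF Ks])
      show "f (P x) \<in> K" using fK Pin by blast
      show "\<forall>z\<in>K. inner (f x - f (P x)) z = 0"
      proof
        fix z assume "z \<in> K"
        then obtain z' where "z' \<in> K" "z = f z'" using fK by blast
        then show "inner (f x - f (P x)) z = 0"
          using fi Porth[of z' x] by (simp add: linear_diff[OF lf, symmetric])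
      qed
    qed
    then show ?thesis by (simp add: C_def2 linear_diff[OF lf] linear_scale[OF lf])
  qed
  have F: "C \<in> Fplus br" by (rule C_F)
  show ?thesis using F comm C_br C_K unfolding Dset_def Fplus_def by (auto simp: fun_eq_iff)
qed

lemma At_app: assumes "basic A" shows "At A t x = t *\<^sub>R (A x - C x) + C x"
  using At_def[where A=A and t=t] assms by simp

lemma At_D:
  assumes A: "A \<in> Dset br Aut K" and Aut: "\<forall>f\<in>Aut. linear f \<and> (\<forall>x y. inner (f x) (f y) = inner x y) \<and> f ` K = K"
    and F: "At A t \<in> Fplus br"
  shows "At A t \<in> Dset br Aut K"
proof -
  have bA: "basic A" by (rule D_basic[OF A])
  have CD: "C \<in> Dset br Aut K" by (rule C_D[OF Aut])
  have c1: "(At A t) \<circ> f = f \<circ> (At A t)" if f: "f \<in> Aut" for f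
  proof
    fix x
    have lf: "linear f" using Aut f by auto
    have h1: "A (f x) = f (A x)" using A f unfolding Dset_def by (auto simp: fun_eq_iff)
    have h2: "C (f x) = f (C x)" using CD f unfolding Dset_def by (auto simp: fun_eq_iff)
    have "((At A t) \<circ> f) x = t *\<^sub>R (f (A x) - f (C x)) + f (C x)"
      by (simp add: At_app[OF bA] h1 h2)
    also have "\<dots> = f (At A t x)"
      by (simp add: At_app[OF bA] linear_add[OF lf] linear_diff[OF lf] linear_scale[OF lf])
    finally show "((At A t) \<circ> f) x = (f \<circ> (At A t)) x" by simp
  qed
  have c2: "At A t x = 0" if "x \<in> K" for x
    using that by (simp add: At_app[OF bA] AK[OF bA] C_K)
  have c3: "At A t (br X y) = br X (At A t y)" if X: "X \<in> K" for X y
  proof -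
    have "At A t (br X y) = t *\<^sub>R (br X (A y) - br X (C y)) + br X (C y)"
      by (simp add: At_app[OF bA] Abr[OF bA X] C_br[OF X])
    also have "\<dots> = br X (At A t y)"
      by (simp add: At_app[OF bA] linear_add[OF br_lin] linear_diff[OF br_lin] linear_scale[OF br_lin])
    finally show ?thesis .
  qed
  show ?thesis using F c1 c2 c3 unfolding Dset_def Fplus_def by blast
qed
end

theorem lemma4p4:
  fixes br :: "'a::euclidean_space \<Rightarrow> 'a \<Rightarrow> 'a"
    and H K :: "'a set" and Aut :: "('a \<Rightarrow> 'a) set"
  assumes g: "compact_lie_alg br"
    and h: "subalgebra br H" "H \<noteq> UNIV"
    and Aut: "compact_aut_group br H Aut"
    and k: "subalgebra br K" "H \<subseteq> K" "K \<noteq> UNIV" "\<forall>f\<in>Aut. f ` K = K"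
    and D: "Dset br Aut K \<noteq> {chibar K}"
  defines "R \<equiv> 1 / (real (codim K) * sqrt (5 - 1 / real (codim K)))"
    and "\<Omega> \<equiv> {A \<in> Dset br Aut K. op_norm_tr (\<lambda>x. A x - chibar K x)
                 = 1 / (real (codim K) * sqrt (5 - 1 / real (codim K)))}"
  shows "\<Omega> \<subseteq> Fplus br
    \<and> (\<forall>A\<in>\<Omega>. \<exists>tA \<ge> 1. \<forall>t \<ge> 0.
          (t \<le> tA \<longrightarrow> (\<lambda>x. t *\<^sub>R (A x - chibar K x) + chibar K x) \<in> Fplus br)
        \<and> (tA < t \<longrightarrow> (\<lambda>x. t *\<^sub>R (A x - chibar K x) + chibar K x) \<notin> Fplus br))
    \<and> star_shaped_wrt (Dset br Aut K \<inter> Fplus br) (chibar K)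
    \<and> {A \<in> Dset br Aut K. op_norm_tr (\<lambda>x. A x - chibar K x) \<le> R} \<subseteq> Dset br Aut K \<inter> Fplus br"
proof -
  interpret LS br K using g k(1) k(3) by unfold_locales
  have AutP: "\<forall>f\<in>Aut. linear f \<and> (\<forall>x y. inner (f x) (f y) = inner x y) \<and> f ` K = K"
    using Aut k(4) by (auto simp: compact_aut_group_def)
  have AtE: "(\<lambda>x. t *\<^sub>R (A x - chibar K x) + chibar K x) = At A t" if "A \<in> Dset br Aut K" for A t
    using At_app[OF D_basic[OF that]] by (simp add: fun_eq_iff)
  have ballF: "A \<in> Fplus br" if "A \<in> Dset br Aut K" "op_norm_tr (\<lambda>x. A x - chibar K x) \<le> R" for A
    using ball[OF that(1)] that(2) by (simp add: R_def)
  have P1: "\<Omega> \<subseteq> Fplus br" using ballF by (auto simp: \<Omega>_def R_def)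
  have P4: "{A \<in> Dset br Aut K. op_norm_tr (\<lambda>x. A x - chibar K x) \<le> R} \<subseteq> Dset br Aut K \<inter> Fplus br"
    using ballF by auto
  have CDF: "chibar K \<in> Dset br Aut K \<inter> Fplus br" using C_D[OF AutP] C_F by blast
  have P3: "star_shaped_wrt (Dset br Aut K \<inter> Fplus br) (chibar K)"
    unfolding star_shaped_wrt_def
  proof (intro conjI ballI)
    show "chibar K \<in> Dset br Aut K \<inter> Fplus br" by (rule CDF)
  next
    fix A s assume A: "A \<in> Dset br Aut K \<inter> Fplus br" and s: "s \<in> {0..1::real}"
    have AD: "A \<in> Dset br Aut K" and AF: "A \<in> Fplus br" using A by auto
    have bA: "basic A" by (rule D_basic[OF AD])
    show "(\<lambda>x. s *\<^sub>R (A x - chibar K x) + chibar K x) \<in> Dset br Aut K \<inter> Fplus br"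
    proof (cases "s = 0")
      case True
      then show ?thesis using CDF AtE[OF AD, of s] At_0[OF bA] by simp
    next
      case False
      then have "0 < s" "s \<le> 1" using s by auto
      then have "At A s \<in> Fplus br" using ray[OF bA _ _] AF At_1[OF bA] by metis
      then show ?thesis using At_D[OF AD AutP] AtE[OF AD, of s] by simp
    qed
  qed
  have P2: "\<forall>A\<in>\<Omega>. \<exists>tA \<ge> 1. \<forall>t \<ge> 0.
          (t \<le> tA \<longrightarrow> (\<lambda>x. t *\<^sub>R (A x - chibar K x) + chibar K x) \<in> Fplus br)
        \<and> (tA < t \<longrightarrow> (\<lambda>x. t *\<^sub>R (A x - chibar K x) + chibar K x) \<notin> Fplus br)"
  proof
    fix A assume AO: "A \<in> \<Omega>"
    have AD: "A \<in> Dset br Aut K" using AO by (simp add: \<Omega>_def)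
    have nA: "op_norm_tr (\<lambda>x. A x - chibar K x) = R" using AO by (simp add: \<Omega>_def R_def)
    have AF: "A \<in> Fplus br" using AO P1 by blast
    have bA: "basic A" by (rule D_basic[OF AD])
    have trA: "trace_op A = 1" using AD by (simp add: Dset_def)
    have Rpos: "R > 0"
    proof -
      have "5 - 1/kk > 0" using kk_ge1 by (simp add: field_simps)
      then show ?thesis using kpos by (simp add: R_def)
    qed
    have ne: "A \<noteq> C"
    proof
      assume "A = C"
      then have "op_norm_tr (\<lambda>x. A x - chibar K x) = 0"
        by (simp add: op_norm_tr_def trace_op_def o_def)
      then show False using nA Rpos by simp
    qed
    obtain T0 where T0: "\<forall>t>T0. At A t \<notin> Fplus br" using unbounded[OF bA trA ne] by blast
    define S where "S = {t. 0 \<le> t \<and> At A t \<in> Fplus br}"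
    have S1: "1 \<in> S" using AF At_1[OF bA] by (simp add: S_def)
    have Sne: "S \<noteq> {}" using S1 by blast
    have Sb: "bdd_above S"
    proof (rule bdd_aboveI)
      fix t assume "t \<in> S" then show "t \<le> T0" using T0 by (auto simp: S_def not_less[symmetric])
    qed
    define tA where "tA = Sup S"
    have tA1: "tA \<ge> 1" using cSup_upper[OF S1 Sb] by (simp add: tA_def)
    have down: "\<forall>s. 0 < s \<and> s < tA \<longrightarrow> At A s \<in> Fplus br"
    proof (intro allI impI)
      fix s assume s: "0 < s \<and> s < tA"
      then obtain r where r: "r \<in> S" "s < r" using less_cSup_iff[OF Sne Sb] by (auto simp: tA_def)
      then show "At A s \<in> Fplus br" using ray[OF bA, of s r] s by (simp add: S_def)
    qed
    have tAin: "At A tA \<in> Fplus br" using closure_F[OF bA _ down] tA1 by simp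
    have "\<forall>t \<ge> 0. (t \<le> tA \<longrightarrow> At A t \<in> Fplus br) \<and> (tA < t \<longrightarrow> At A t \<notin> Fplus br)"
    proof (intro allI impI conjI)
      fix t :: real assume t0: "t \<ge> 0"
      { assume "t \<le> tA"
        show "At A t \<in> Fplus br"
        proof (cases "t = 0")
          case True then show ?thesis using At_0[OF bA] C_F by simp
        next
          case False
          show ?thesis
          proof (cases "t = tA")
            case True then show ?thesis using tAin by simp
          next
            case False
            then show ?thesis using down \<open>t \<noteq> 0\<close> t0 \<open>t \<le> tA\<close> by simp
          qed
        qed }
      { assume "tA < t"
        show "At A t \<notin> Fplus br"
        proof
          assume "At A t \<in> Fplus br"
          then have "t \<in> S" using t0 by (simp add: S_def)
          then have "t \<le> tA" using cSup_upper[OF _ Sb] by (simp add: tA_def)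
          then show False using \<open>tA < t\<close> by simp
        qed }
    qed
    then show "\<exists>tA \<ge> 1. \<forall>t \<ge> 0.
          (t \<le> tA \<longrightarrow> (\<lambda>x. t *\<^sub>R (A x - chibar K x) + chibar K x) \<in> Fplus br)
        \<and> (tA < t \<longrightarrow> (\<lambda>x. t *\<^sub>R (A x - chibar K x) + chibar K x) \<notin> Fplus br)"
      using tA1 AtE[OF AD] by auto
  qed
  show ?thesis using P1 P2 P3 P4 by blast
qed

end
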